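(* If $f\in H^2$ extends to be analytic on a neighborhood of $1$, then $U^*f(x)=\sum_{j=0}^\infty f^{(j)}(1)\frac{(\ln x)^j}{(j!)^2}$.
   Context: $H^2$ is the Hardy space of the unit disc $\mathbb{D}$, $k_\alpha(z)=\frac{1}{1-\bar\alpha z}$. The Sarason transform $U$ is the unique unitary operator from $L^2([0,1])$ onto $H^2$ with $U(x^n)=\frac{1}{n+1}k_{\frac{n}{n+1}}$ for integers $n\ge0$, and $U^*$ is its inverse. *)

theory Defs
  imports "HOL-Complex_Analysis.Complex_Analysis"
begin

text \<open>Hardy space H^2 of the unit disc: analytic functions on the disc whose Taylor
  coefficients at 0 are square summable (only the values on the disc matter).\<close>

definition taylor_coeff :: "(complex \<Rightarrow> complex) \<Rightarrow> nat \<Rightarrow> complex" where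
  "taylor_coeff f n = (deriv ^^ n) f 0 / of_nat (fact n)"

definition H2 :: "(complex \<Rightarrow> complex) set" where
  "H2 = {f. f holomorphic_on ball 0 1 \<and> summable (\<lambda>n. (cmod (taylor_coeff f n))\<^sup>2)}"

definition H2_norm :: "(complex \<Rightarrow> complex) \<Rightarrow> real" where
  "H2_norm f = sqrt (\<Sum>n. (cmod (taylor_coeff f n))\<^sup>2)"

definition kernel :: "complex \<Rightarrow> complex \<Rightarrow> complex" where
  "kernel \<alpha> z = 1 / (1 - cnj \<alpha> * z)"

definition L2 :: "(real \<Rightarrow> complex) set" where
  "L2 = {g. set_borel_measurable lborel {0..1} g \<and>
            set_integrable lborel {0..1} (\<lambda>x. (cmod (g x))\<^sup>2)}"

definition L2_norm :: "(real \<Rightarrow> complex) \<Rightarrow> real" where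
  "L2_norm g = sqrt (LINT x:{0..1}|lborel. (cmod (g x))\<^sup>2)"

text \<open>U is (a representative-level description of) the Sarason transform: a linear map
  L^2([0,1]) \<rightarrow> H^2, well defined on a.e.-classes, isometric and onto (i.e. unitary),
  with U(x^n) = 1/(n+1) k_{n/(n+1)}.  Equalities in H^2 are equalities on the disc.\<close>
definition is_sarason :: "((real \<Rightarrow> complex) \<Rightarrow> complex \<Rightarrow> complex) \<Rightarrow> bool" where
  "is_sarason U \<longleftrightarrow>
     (\<forall>g\<in>L2. U g \<in> H2) \<and>
     (\<forall>g\<in>L2. \<forall>h\<in>L2. \<forall>z\<in>ball 0 1. U (\<lambda>x. g x + h x) z = U g z + U h z) \<and>
     (\<forall>g\<in>L2. \<forall>c. \<forall>z\<in>ball 0 1. U (\<lambda>x. c * g x) z = c * U g z) \<and>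
     (\<forall>g\<in>L2. \<forall>h\<in>L2. (AE x in lborel. x \<in> {0..1} \<longrightarrow> g x = h x) \<longrightarrow>
                         (\<forall>z\<in>ball 0 1. U g z = U h z)) \<and>
     (\<forall>g\<in>L2. H2_norm (U g) = L2_norm g) \<and>
     (\<forall>f\<in>H2. \<exists>g\<in>L2. \<forall>z\<in>ball 0 1. U g z = f z) \<and>
     (\<forall>n::nat. \<forall>z\<in>ball 0 1.
        U (\<lambda>x. complex_of_real x ^ n) z
          = (1 / of_nat (n + 1)) * kernel (of_nat n / of_nat (n + 1)) z)"

end

theory Submission
  imports Defs
begin

lemma xpow_ln_tendsto:
  "((\<lambda>x::real. x^(Suc n) * (- ln x)^j) \<longlongrightarrow> 0) (at_right 0)"
proof -
  have l: "LIM x at_right 0. - ln (x::real) :> at_top"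
    using ln_at_0 filterlim_uminus_at_top by (simp add: filterlim_uminus_at_bot) 
  have "((\<lambda>x::real. (- ln x)^j / exp (- ln x)) \<longlongrightarrow> 0) (at_right 0)"
    by (rule filterlim_compose[OF tendsto_power_div_exp_0 l])
  moreover have "((\<lambda>x::real. x^n) \<longlongrightarrow> 0^n) (at_right 0)"
    by (intro tendsto_intros)
  ultimately have "((\<lambda>x::real. x^n * ((- ln x)^j / exp (- ln x))) \<longlongrightarrow> 0^n * 0) (at_right 0)"
    by (intro tendsto_mult)
  moreover have "eventually (\<lambda>x::real. x^n * ((- ln x)^j / exp (- ln x)) = x^(Suc n) * (- ln x)^j) (at_right 0)"
  proof -
    have "eventually (\<lambda>x::real. x > 0) (at_right 0)" by (simp add: eventually_at_filter)
    then show ?thesis by eventually_elim (simp add: exp_minus field_simps)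
  qed
  ultimately show ?thesis by (simp add: tendsto_cong)
qed

fun Amom :: "nat \<Rightarrow> nat \<Rightarrow> real \<Rightarrow> real" where
  "Amom n 0 x = x^(Suc n) / Suc n"
| "Amom n (Suc j) x = x^(Suc n) * (- ln x)^(Suc j) / Suc n + Suc j / Suc n * Amom n j x"

lemma Amom_deriv: "x > 0 \<Longrightarrow> (Amom n j has_real_derivative x^n * (- ln x)^j) (at x)"
proof (induction j)
  case 0
  have "((\<lambda>x. x^(Suc n) / Suc n) has_real_derivative (real (Suc n) * x^n) / Suc n) (at x)"
    using DERIV_cdivide[OF DERIV_pow[of "Suc n" x UNIV], of "real (Suc n)"] by simp
  then show ?case by simp
next
  case (Suc j)
  have d1: "((\<lambda>x. x^(Suc n)) has_real_derivative real (Suc n) * x^n) (at x)"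
    using DERIV_pow[of "Suc n" x UNIV] by simp
  have d2: "((\<lambda>x. - ln x) has_real_derivative - inverse x) (at x)"
    using DERIV_minus[OF DERIV_ln[OF Suc.prems]] .
  have d3: "((\<lambda>x. (- ln x)^(Suc j)) has_real_derivative real (Suc j) * (- ln x)^j * (- inverse x)) (at x)"
    using DERIV_power[OF d2, of "Suc j"] by (simp add: mult_ac)
  have der: "((\<lambda>x. x^(Suc n) * (- ln x)^(Suc j) / Suc n + Suc j / Suc n * Amom n j x) has_real_derivative
     (real (Suc n) * x^n * (- ln x)^(Suc j) + real (Suc j) * (- ln x)^j * (- inverse x) * x^(Suc n)) / Suc n + Suc j / Suc n * (x^n * (- ln x)^j)) (at x)"
    by (intro DERIV_add DERIV_cdivide DERIV_mult d1 d3 DERIV_cmult Suc.IH Suc.prems)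
  have eq0: "(real (Suc n) * x^n * L^(Suc j) + real (Suc j) * L^j * (- inverse x) * x^(Suc n)) / Suc n + Suc j / Suc n * (x^n * L^j)
     = x^n * L^(Suc j)" for L
  proof -
    have h: "(- inverse x) * x^(Suc n) = - (x^n)" using Suc.prems by simp
    have "real (Suc j) * L^j * (- inverse x) * x^(Suc n) = real (Suc j) * L^j * ((- inverse x) * x^(Suc n))"
      by (simp only: mult.assoc)
    also have "\<dots> = - (real (Suc j) * L^j * x^n)" by (simp only: h)
    finally have h2: "real (Suc j) * L^j * (- inverse x) * x^(Suc n) = - (real (Suc j) * L^j * x^n)" .
    have h3: "0 < 1 + (real n * real n + real n * 2)" by (intro add_pos_nonneg) auto
    show ?thesis unfolding h2 using h3 by (simp add: field_simps)
  qed
  note eq = eq0[of "- ln x"]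
  show ?case using DERIV_cong[OF der eq] by simp
qed

lemma Amom_0: "((Amom n j) \<longlongrightarrow> 0) (at_right 0)"
proof (induction j)
  case 0
  then show ?case by (auto intro!: tendsto_eq_intros)
next
  case (Suc j)
  have "((\<lambda>x. x^(Suc n) * (- ln x)^(Suc j) / Suc n + Suc j / Suc n * Amom n j x) \<longlongrightarrow> 0 / Suc n + Suc j / Suc n * 0) (at_right 0)"
    by (intro tendsto_add tendsto_divide tendsto_mult tendsto_const xpow_ln_tendsto Suc.IH) auto
  then show ?case by simp
qed

lemma Amom_1: "Amom n j 1 = fact j / (Suc n)^(Suc j)"
  by (induction j) (auto simp: field_simps)

lemma Amom_cont: "x > 0 \<Longrightarrow> isCont (Amom n j) x"
  using Amom_deriv DERIV_isCont by blast

lemma mom: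
  shows "set_integrable lborel {0..1} (\<lambda>x::real. x^n * (- ln x)^j)"
    and "(LINT x:{0..1}|lborel. x^n * (- ln x)^j) = fact j / (Suc n)^(Suc j)"
proof -
  have A: "((Amom n j \<circ> real_of_ereal) \<longlongrightarrow> 0) (at_right 0)"
    using Amom_0 by (simp add: zero_ereal_def ereal_tendsto_simps)
  have B: "((Amom n j \<circ> real_of_ereal) \<longlongrightarrow> Amom n j 1) (at_left 1)"
    using Amom_cont[of 1 n j] by (simp add: one_ereal_def ereal_tendsto_simps isCont_def Lim_at_imp_Lim_at_within)
  have *: "set_integrable lborel (einterval 0 1) (\<lambda>x::real. x^n * (- ln x)^j)"
      "(LBINT x=0..1. x^n * (- ln x)^j) = Amom n j 1 - 0"
    by (rule interval_integral_FTC_nonneg[OF _ _ _ _ A B]; 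
        auto simp: zero_ereal_def one_ereal_def intro!: Amom_deriv continuous_intros)+
  have e: "einterval 0 1 = {0<..<(1::real)}"
    by (simp add: zero_ereal_def one_ereal_def)
  show "set_integrable lborel {0..1} (\<lambda>x::real. x^n * (- ln x)^j)"
    using *(1) unfolding e
    by (subst set_integrable_discrete_difference[where X="{0,1}"]) auto
  show "(LINT x:{0..1}|lborel. x^n * (- ln x)^j) = fact j / (Suc n)^(Suc j)"
    using *(2) by (simp add: Amom_1 interval_integral_Icc[symmetric] zero_ereal_def[symmetric] one_ereal_def[symmetric])
qed

lemma ae_zero_from_Ioi:
  fixes \<psi> :: "real \<Rightarrow> real"
  assumes int: "integrable lborel \<psi>"
    and z: "\<And>a. (\<integral>x. indicator {a<..} x * \<psi> x \<partial>lborel) = 0"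
  shows "AE x in lborel. \<psi> x = 0"
proof -
  define P where "P x = max 0 (\<psi> x)" for x
  define N where "N x = max 0 (- \<psi> x)" for x
  have [measurable]: "\<psi> \<in> borel_measurable lborel" using int by auto
  have iP: "integrable lborel P" unfolding P_def using int by auto
  have iN: "integrable lborel N" unfolding N_def using int by auto
  have mP[measurable]: "P \<in> borel_measurable lborel" unfolding P_def by measurable
  have mN[measurable]: "N \<in> borel_measurable lborel" unfolding N_def by measurable
  have PN: "\<psi> x = P x - N x" for x unfolding P_def N_def by auto
  have Pnn: "0 \<le> P x" for x unfolding P_def by auto
  have Nnn: "0 \<le> N x" for x unfolding N_def by auto
  have eqA: "emeasure (density lborel (\<lambda>x. ennreal (P x))) {a<..} =
        emeasure (density lborel (\<lambda>x. ennreal (N x))) {a<..}" for a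
  proof -
    have iPa: "integrable lborel (\<lambda>x. P x * indicator {a<..} x)"
      using integrable_mult_indicator[of "{a<..}" lborel P] iP by (simp add: mult.commute)
    have iNa: "integrable lborel (\<lambda>x. N x * indicator {a<..} x)"
      using integrable_mult_indicator[of "{a<..}" lborel N] iN by (simp add: mult.commute)
    have "emeasure (density lborel (\<lambda>x. ennreal (P x))) {a<..} = (\<integral>\<^sup>+x. ennreal (P x * indicator {a<..} x) \<partial>lborel)"
      by (subst emeasure_density) (auto intro!: nn_integral_cong simp: indicator_def)
    also have "\<dots> = ennreal (\<integral>x. P x * indicator {a<..} x \<partial>lborel)"
      using iPa by (intro nn_integral_eq_integral) (auto simp: Pnn)
    also have "(\<integral>x. P x * indicator {a<..} x \<partial>lborel) = (\<integral>x. N x * indicator {a<..} x \<partial>lborel)"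
    proof -
      have "(\<integral>x. P x * indicator {a<..} x \<partial>lborel) - (\<integral>x. N x * indicator {a<..} x \<partial>lborel)
          = (\<integral>x. P x * indicator {a<..} x - N x * indicator {a<..} x \<partial>lborel)"
        using iPa iNa by simp
      also have "\<dots> = (\<integral>x. indicator {a<..} x * \<psi> x \<partial>lborel)"
        by (intro Bochner_Integration.integral_cong) (auto simp: PN algebra_simps)
      finally show ?thesis using z[of a] by simp
    qed
    also have "ennreal (\<integral>x. N x * indicator {a<..} x \<partial>lborel) = (\<integral>\<^sup>+x. ennreal (N x * indicator {a<..} x) \<partial>lborel)"
      using iNa by (intro nn_integral_eq_integral[symmetric]) (auto simp: Nnn)
    also have "\<dots> = emeasure (density lborel (\<lambda>x. ennreal (N x))) {a<..}"
      by (subst emeasure_density) (auto intro!: nn_integral_cong simp: indicator_def)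
    finally show ?thesis .
  qed
  have finA: "emeasure (density lborel (\<lambda>x. ennreal (P x))) {a<..} < \<infinity>" for a
  proof -
    have "emeasure (density lborel (\<lambda>x. ennreal (P x))) {a<..} \<le> emeasure (density lborel (\<lambda>x. ennreal (P x))) UNIV"
      by (intro emeasure_mono) auto
    also have "\<dots> = (\<integral>\<^sup>+x. ennreal (P x) * indicator UNIV x \<partial>lborel)"
      by (rule emeasure_density) measurable
    also have "\<dots> = (\<integral>\<^sup>+x. ennreal (P x) \<partial>lborel)"
      by simp
    also have "\<dots> = ennreal (\<integral>x. P x \<partial>lborel)"
      using iP by (intro nn_integral_eq_integral) (auto simp: Pnn)
    finally show ?thesis by (simp add: le_less_trans)
  qed
  have "density lborel (\<lambda>x. ennreal (P x)) = density lborel (\<lambda>x. ennreal (N x))"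
    by (rule measure_eqI_lessThan[OF _ _ finA eqA]) simp_all
  then have "AE x in lborel. ennreal (P x) = ennreal (N x)"
    using sigma_finite_measure.density_unique_iff[OF sigma_finite_lborel, of "\<lambda>x. ennreal (P x)" "\<lambda>x. ennreal (N x)"] by simp
  then show ?thesis
  proof eventually_elim
    case (elim x)
    have "P x \<ge> 0" "N x \<ge> 0" unfolding P_def N_def by auto
    then have "P x = N x" using elim by simp
    then show ?case using PN[of x] by simp
  qed
qed

lemma ae_zero_from_cont:
  fixes \<psi> :: "real \<Rightarrow> complex"
  assumes int: "integrable lborel \<psi>"
    and z: "\<And>c. continuous_on UNIV c \<Longrightarrow> (\<forall>x. 0 \<le> c x \<and> c x \<le> 1) \<Longrightarrow>
          (\<integral>x. \<psi> x * of_real (c x) \<partial>lborel) = 0"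
  shows "AE x in lborel. \<psi> x = 0"
proof -
  have [measurable]: "\<psi> \<in> borel_measurable lborel" using int by auto
  have I: "(\<integral>x. \<psi> x * of_real (indicator {a<..} x) \<partial>lborel) = 0" for a
  proof -
    define c where "c k x = min 1 (max 0 (real (Suc k) * (x - a)))" for k x
    have cc: "continuous_on UNIV (c k)" for k unfolding c_def by (intro continuous_intros)
    have cb: "0 \<le> c k x \<and> c k x \<le> 1" for k x unfolding c_def by auto
    have lim: "(\<lambda>k. \<psi> x * of_real (c k x)) \<longlonglongrightarrow> \<psi> x * of_real (indicator {a<..} x)" for x
    proof (cases "x \<le> a")
      case True
      then have "c k x = 0" for k unfolding c_def by (auto simp: mult_nonneg_nonpos)
      then show ?thesis using True by simp
    next
      case False
      then have xa: "x - a > 0" by simp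
      obtain k0 where k0: "1 / (x - a) < real k0" using reals_Archimedean2 by blast
      have "c k x = 1" if "k \<ge> k0" for k
      proof -
        have "1 / (x - a) < real (Suc k)" using k0 that by linarith
        then have "1 < real (Suc k) * (x - a)" using xa by (simp add: field_simps)
        then show ?thesis unfolding c_def by simp
      qed
      then have "eventually (\<lambda>k. \<psi> x * of_real (c k x) = \<psi> x * of_real (indicator {a<..} x)) sequentially"
        using False unfolding eventually_sequentially by auto
      then show ?thesis by (rule tendsto_eventually)
    qed
    have "(\<lambda>k. \<integral>x. \<psi> x * of_real (c k x) \<partial>lborel) \<longlonglongrightarrow> (\<integral>x. \<psi> x * of_real (indicator {a<..} x) \<partial>lborel)"
    proof (rule integral_dominated_convergence[where w="\<lambda>x. norm (\<psi> x)"])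
      have [measurable]: "c k \<in> borel_measurable borel" for k
        using cc by (rule borel_measurable_continuous_onI)
      show "\<And>k. (\<lambda>x. \<psi> x * complex_of_real (c k x)) \<in> borel_measurable lborel"
        by measurable
      show "(\<lambda>x. \<psi> x * of_real (indicator {a<..} x)) \<in> borel_measurable lborel"
        by measurable
      show "integrable lborel (\<lambda>x. norm (\<psi> x))" using int by (rule integrable_norm)
      show "AE x in lborel. (\<lambda>k. \<psi> x * of_real (c k x)) \<longlonglongrightarrow> \<psi> x * of_real (indicator {a<..} x)"
        using lim by simp
      show "AE x in lborel. norm (\<psi> x * of_real (c k x)) \<le> norm (\<psi> x)" for k
      proof (rule AE_I2)
        fix x show "norm (\<psi> x * of_real (c k x)) \<le> norm (\<psi> x)"
          using cb[of k x] by (simp add: norm_mult mult_left_le)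
      qed
    qed
    moreover have zk: "(\<integral>x. \<psi> x * of_real (c k x) \<partial>lborel) = 0" for k
      by (rule z[OF cc]) (use cb in blast)
    ultimately have "(\<lambda>k. 0) \<longlonglongrightarrow> (\<integral>x. \<psi> x * of_real (indicator {a<..} x) \<partial>lborel)"
      by simp
    then show ?thesis by (simp add: LIMSEQ_const_iff)
  qed
  have intI: "integrable lborel (\<lambda>x. \<psi> x * of_real (indicator {a<..} x))" for a
  proof -
    have "(\<lambda>x. \<psi> x * of_real (indicator {a<..} x)) = (\<lambda>x. indicator {a<..} x *\<^sub>R \<psi> x)"
      by (auto simp: fun_eq_iff indicator_def)
    then show ?thesis using integrable_mult_indicator[of "{a<..}" lborel \<psi>] int by simp
  qed
  have "AE x in lborel. Re (\<psi> x) = 0"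
  proof (rule ae_zero_from_Ioi)
    show "integrable lborel (\<lambda>x. Re (\<psi> x))" using int by auto
    fix a
    have "(\<integral>x. indicator {a<..} x * Re (\<psi> x) \<partial>lborel) = (\<integral>x. Re (\<psi> x * of_real (indicator {a<..} x)) \<partial>lborel)"
      by (intro Bochner_Integration.integral_cong) auto
    also have "\<dots> = Re (\<integral>x. \<psi> x * of_real (indicator {a<..} x) \<partial>lborel)"
      by (rule integral_Re[OF intI[of a]])
    finally show "(\<integral>x. indicator {a<..} x * Re (\<psi> x) \<partial>lborel) = 0" using I by simp
  qed
  moreover have "AE x in lborel. Im (\<psi> x) = 0"
  proof (rule ae_zero_from_Ioi)
    show "integrable lborel (\<lambda>x. Im (\<psi> x))" using int by auto
    fix a
    have "(\<integral>x. indicator {a<..} x * Im (\<psi> x) \<partial>lborel) = (\<integral>x. Im (\<psi> x * of_real (indicator {a<..} x)) \<partial>lborel)"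
      by (intro Bochner_Integration.integral_cong) auto
    also have "\<dots> = Im (\<integral>x. \<psi> x * of_real (indicator {a<..} x) \<partial>lborel)"
      by (rule integral_Im[OF intI[of a]])
    finally show "(\<integral>x. indicator {a<..} x * Im (\<psi> x) \<partial>lborel) = 0" using I by simp
  qed
  ultimately show ?thesis by eventually_elim (simp add: complex_eq_iff)
qed


lemma orth_poly_cont:
  fixes \<psi> :: "real \<Rightarrow> complex"
  assumes int: "integrable lborel \<psi>" and out: "\<And>x. x \<notin> {0..1} \<Longrightarrow> \<psi> x = 0"
    and z: "\<And>n. (\<integral>x. \<psi> x * complex_of_real x ^ n \<partial>lborel) = 0"
    and c: "continuous_on UNIV c"
  shows "(\<integral>x. \<psi> x * of_real (c x) \<partial>lborel) = 0"
proof -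
  have [measurable]: "\<psi> \<in> borel_measurable lborel" using int by auto
  have intp: "integrable lborel (\<lambda>x. \<psi> x * of_real (f x))" if f: "continuous_on UNIV f" for f :: "real \<Rightarrow> real"
  proof -
    have "compact (f ` {0..1})" by (rule compact_continuous_image) (use f continuous_on_subset in auto)
    then obtain B where B: "\<And>y. y \<in> f ` {0..1} \<Longrightarrow> norm y \<le> B"
      using compact_imp_bounded bounded_iff by metis
    have [measurable]: "f \<in> borel_measurable borel" using f by (rule borel_measurable_continuous_onI)
    show ?thesis
    proof (rule Bochner_Integration.integrable_bound[where f="\<lambda>x. B * norm (\<psi> x)"])
      show "integrable lborel (\<lambda>x. B * norm (\<psi> x))" using int by auto
      show "(\<lambda>x. \<psi> x * of_real (f x)) \<in> borel_measurable lborel" by measurable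
      show "AE x in lborel. norm (\<psi> x * of_real (f x)) \<le> norm (B * norm (\<psi> x))"
      proof (rule AE_I2)
        fix x
        show "norm (\<psi> x * of_real (f x)) \<le> norm (B * norm (\<psi> x))"
        proof (cases "x \<in> {0..1}")
          case True
          then have fB: "\<bar>f x\<bar> \<le> B" using B by auto
          have "norm (\<psi> x * of_real (f x)) = \<bar>f x\<bar> * norm (\<psi> x)" by (simp add: norm_mult)
          also have "\<dots> \<le> B * norm (\<psi> x)" using fB by (rule mult_right_mono) simp
          also have "\<dots> \<le> norm (B * norm (\<psi> x))" by simp
          finally show ?thesis .
        next
          case False then show ?thesis using out by simp
        qed
      qed
    qed
  qed
  define K where "K = (\<integral>x. norm (\<psi> x) \<partial>lborel)"
  have K0: "K \<ge> 0" unfolding K_def by simp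
  have bound: "norm (\<integral>x. \<psi> x * of_real (c x) \<partial>lborel) \<le> e * K" if e: "e > 0" for e
  proof -
    obtain p where p: "real_polynomial_function p" and pc: "\<And>x. x \<in> {0..1} \<Longrightarrow> \<bar>c x - p x\<bar> < e"
      using Stone_Weierstrass_real_polynomial_function[of "{0..1::real}" c e] c e continuous_on_subset by blast
    obtain a n where pe: "p = (\<lambda>x. \<Sum>i\<le>n. a i * x^i)" using p real_polynomial_function_iff_sum by blast
    have pcont: "continuous_on UNIV p" unfolding pe by (intro continuous_intros)
    have powcont: "continuous_on UNIV (\<lambda>x::real. x^i)" for i by (intro continuous_intros)
    have intpow: "integrable lborel (\<lambda>x. \<psi> x * complex_of_real x ^ i)" for i
      using intp[OF powcont[of i]] by simp
    have "(\<integral>x. \<psi> x * of_real (p x) \<partial>lborel) = (\<integral>x. (\<Sum>i\<le>n. of_real (a i) * (\<psi> x * complex_of_real x ^ i)) \<partial>lborel)"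
      unfolding pe by (intro Bochner_Integration.integral_cong) (auto simp: sum_distrib_left mult_ac)
    also have "\<dots> = 0" using intpow z by simp
    finally have p0: "(\<integral>x. \<psi> x * of_real (p x) \<partial>lborel) = 0" .
    have "(\<integral>x. \<psi> x * of_real (c x) \<partial>lborel) = (\<integral>x. \<psi> x * of_real (c x) \<partial>lborel) - (\<integral>x. \<psi> x * of_real (p x) \<partial>lborel)"
      using p0 by simp
    also have "\<dots> = (\<integral>x. \<psi> x * of_real (c x - p x) \<partial>lborel)"
      using intp[OF c] intp[OF pcont] by (simp add: algebra_simps)
    finally have eq: "(\<integral>x. \<psi> x * of_real (c x) \<partial>lborel) = (\<integral>x. \<psi> x * of_real (c x - p x) \<partial>lborel)" .
    have cpcont: "continuous_on UNIV (\<lambda>x. c x - p x)" using c pcont by (intro continuous_intros)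
    have "norm (\<integral>x. \<psi> x * of_real (c x - p x) \<partial>lborel) \<le> (\<integral>x. norm (\<psi> x * of_real (c x - p x)) \<partial>lborel)"
      by (rule integral_norm_bound)
    also have "\<dots> \<le> (\<integral>x. e * norm (\<psi> x) \<partial>lborel)"
    proof (rule integral_mono)
      show "integrable lborel (\<lambda>x. norm (\<psi> x * of_real (c x - p x)))" using intp[OF cpcont] by auto
      show "integrable lborel (\<lambda>x. e * norm (\<psi> x))" using int by auto
      fix x show "norm (\<psi> x * of_real (c x - p x)) \<le> e * norm (\<psi> x)"
      proof (cases "x \<in> {0..1}")
        case True
        then have cpe: "\<bar>c x - p x\<bar> \<le> e" using pc[of x] by simp
        have "norm (\<psi> x * of_real (c x - p x)) = \<bar>c x - p x\<bar> * norm (\<psi> x)"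
          by (simp only: norm_mult norm_of_real mult.commute)
        also have "\<dots> \<le> e * norm (\<psi> x)" using cpe by (rule mult_right_mono) simp
        finally show ?thesis .
      next
        case False then show ?thesis using out by simp
      qed
    qed
    also have "\<dots> = e * K" unfolding K_def by simp
    finally show ?thesis using eq by simp
  qed
  have "norm (\<integral>x. \<psi> x * of_real (c x) \<partial>lborel) \<le> 0"
  proof (rule field_le_epsilon)
    fix d :: real assume d: "d > 0"
    have "norm (\<integral>x. \<psi> x * of_real (c x) \<partial>lborel) \<le> d / (K + 1) * K"
      using bound[of "d / (K + 1)"] d K0 by simp
    also have "\<dots> \<le> d" using d K0 by (simp add: field_simps)
    finally show "norm (\<integral>x. \<psi> x * of_real (c x) \<partial>lborel) \<le> 0 + d" by simp
  qed
  then show ?thesis by simp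
qed

lemma moment_unique:
  fixes \<phi> :: "real \<Rightarrow> complex"
  assumes int: "set_integrable lborel {0..1} \<phi>"
    and z: "\<And>n. n \<ge> N \<Longrightarrow> (LINT x:{0..1}|lborel. \<phi> x * complex_of_real x ^ n) = 0"
  shows "AE x in lborel. x \<in> {0..1} \<longrightarrow> \<phi> x = 0"
proof -
  define \<psi> where "\<psi> x = indicator {0..1} x *\<^sub>R (\<phi> x * complex_of_real x ^ N)" for x
  have m1[measurable]: "(\<lambda>x. indicator {0..1} x *\<^sub>R \<phi> x) \<in> borel_measurable lborel"
    using int unfolding set_integrable_def by auto
  have \<psi>e: "\<psi> x = (indicator {0..1} x *\<^sub>R \<phi> x) * complex_of_real x ^ N" for x
    unfolding \<psi>_def by simp
  have int\<psi>: "integrable lborel \<psi>"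
  proof (rule Bochner_Integration.integrable_bound[where f="\<lambda>x. indicator {0..1} x *\<^sub>R \<phi> x"])
    show "integrable lborel (\<lambda>x. indicator {0..1} x *\<^sub>R \<phi> x)" using int unfolding set_integrable_def .
    show "\<psi> \<in> borel_measurable lborel" unfolding \<psi>e by measurable
    show "AE x in lborel. norm (\<psi> x) \<le> norm (indicator {0..1} x *\<^sub>R \<phi> x)"
    proof (rule AE_I2)
      fix x show "norm (\<psi> x) \<le> norm (indicator {0..1} x *\<^sub>R \<phi> x)"
        by (cases "x \<in> {0..1}") (auto simp: \<psi>_def norm_mult norm_power mult_left_le power_le_one)
    qed
  qed
  have out: "x \<notin> {0..1} \<Longrightarrow> \<psi> x = 0" for x unfolding \<psi>_def by simp
  have zz: "(\<integral>x. \<psi> x * complex_of_real x ^ n \<partial>lborel) = 0" for n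
  proof -
    have "(\<integral>x. \<psi> x * complex_of_real x ^ n \<partial>lborel) = (LINT x:{0..1}|lborel. \<phi> x * complex_of_real x ^ (N + n))"
      unfolding set_lebesgue_integral_def \<psi>_def
      by (intro Bochner_Integration.integral_cong) (auto simp: power_add mult_ac)
    also have "\<dots> = 0" by (rule z) simp
    finally show ?thesis .
  qed
  have "AE x in lborel. \<psi> x = 0"
  proof (rule ae_zero_from_cont[OF int\<psi>])
    fix c :: "real \<Rightarrow> real" assume cc: "continuous_on UNIV c"
    show "(\<integral>x. \<psi> x * of_real (c x) \<partial>lborel) = 0"
      using orth_poly_cont[OF int\<psi> out zz cc] .
  qed
  then show ?thesis using AE_lborel_singleton[of 0]
  proof eventually_elim
    case (elim x)
    show ?case
    proof
      assume x: "x \<in> {0..1}"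
      then have "\<phi> x * complex_of_real x ^ N = 0" using elim unfolding \<psi>_def by simp
      then show "\<phi> x = 0" using elim by simp
    qed
  qed
qed

lemma cmod_add_sq:
  "(cmod (a + c * b))\<^sup>2 = (cmod a)\<^sup>2 + (cmod c)\<^sup>2 * (cmod b)\<^sup>2 + 2 * Re (cnj c * (a * cnj b))"
  unfolding cmod_power2 by (simp add: algebra_simps power2_eq_square)

lemma norm_mult_cnj_le: "cmod (a * cnj b) \<le> (cmod a)\<^sup>2 + (cmod b)\<^sup>2"
proof -
  have "0 \<le> (cmod a - cmod b)\<^sup>2" by simp
  then have "2 * (cmod a * cmod b) \<le> (cmod a)\<^sup>2 + (cmod b)\<^sup>2" by (simp add: power2_eq_square algebra_simps)
  moreover have "cmod a * cmod b \<ge> 0" by simp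
  ultimately have "cmod a * cmod b \<le> (cmod a)\<^sup>2 + (cmod b)\<^sup>2" by linarith
  then show ?thesis by (simp add: norm_mult)
qed

lemma tc_cong:
  assumes "\<forall>z\<in>ball 0 1. f z = g z"
  shows "taylor_coeff f n = taylor_coeff g n"
proof -
  have "eventually (\<lambda>z. z \<in> ball (0::complex) 1) (nhds 0)"
    by (intro eventually_nhds_in_open) auto
  then have "eventually (\<lambda>z. f z = g z) (nhds 0)"
    by eventually_elim (use assms in auto)
  then have "(deriv ^^ n) f 0 = (deriv ^^ n) g 0"
    by (rule higher_deriv_cong_ev) simp
  then show ?thesis unfolding taylor_coeff_def by simp
qed

lemma tc_lin:
  assumes "f holomorphic_on ball 0 1" "g holomorphic_on ball 0 1"
  shows "taylor_coeff (\<lambda>z. f z + c * g z) n = taylor_coeff f n + c * taylor_coeff g n"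
proof -
  have "(deriv ^^ n) (\<lambda>z. f z + c * g z) 0 = (deriv ^^ n) f 0 + (deriv ^^ n) (\<lambda>z. c * g z) 0"
    by (rule higher_deriv_add) (use assms in \<open>auto intro!: holomorphic_intros\<close>)
  also have "(deriv ^^ n) (\<lambda>z. c * g z) 0 = c * (deriv ^^ n) g 0"
    by (rule higher_deriv_cmult[of _ "ball 0 1"]) (use assms in auto)
  finally show ?thesis unfolding taylor_coeff_def by (simp add: add_divide_distrib)
qed

lemma sum_expand:
  fixes a b :: "nat \<Rightarrow> complex"
  assumes sa: "summable (\<lambda>k. (cmod (a k))\<^sup>2)" and sb: "summable (\<lambda>k. (cmod (b k))\<^sup>2)"
  shows "summable (\<lambda>k. a k * cnj (b k))"
    and "summable (\<lambda>k. (cmod (a k + c * b k))\<^sup>2)"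
    and "(\<Sum>k. (cmod (a k + c * b k))\<^sup>2) = (\<Sum>k. (cmod (a k))\<^sup>2) + (cmod c)\<^sup>2 * (\<Sum>k. (cmod (b k))\<^sup>2)
          + 2 * Re (cnj c * (\<Sum>k. a k * cnj (b k)))"
proof -
  show sab: "summable (\<lambda>k. a k * cnj (b k))"
    by (rule summable_comparison_test'[OF summable_add[OF sa sb], of 0]) (rule norm_mult_cnj_le)
  have s1: "(\<lambda>k. cnj c * (a k * cnj (b k))) sums (cnj c * (\<Sum>k. a k * cnj (b k)))"
    by (intro sums_mult summable_sums sab)
  have s2: "(\<lambda>k. 2 * Re (cnj c * (a k * cnj (b k)))) sums (2 * Re (cnj c * (\<Sum>k. a k * cnj (b k))))"
    using s1 unfolding sums_complex_iff by (intro sums_mult) auto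
  have s3: "(\<lambda>k. (cmod (a k))\<^sup>2 + (cmod c)\<^sup>2 * (cmod (b k))\<^sup>2 + 2 * Re (cnj c * (a k * cnj (b k)))) sums
      ((\<Sum>k. (cmod (a k))\<^sup>2) + (cmod c)\<^sup>2 * (\<Sum>k. (cmod (b k))\<^sup>2) + 2 * Re (cnj c * (\<Sum>k. a k * cnj (b k))))"
    by (intro sums_add s2 sums_mult summable_sums sa sb)
  then have s4: "(\<lambda>k. (cmod (a k + c * b k))\<^sup>2) sums
      ((\<Sum>k. (cmod (a k))\<^sup>2) + (cmod c)\<^sup>2 * (\<Sum>k. (cmod (b k))\<^sup>2) + 2 * Re (cnj c * (\<Sum>k. a k * cnj (b k))))"
    by (simp only: cmod_add_sq)
  then show "summable (\<lambda>k. (cmod (a k + c * b k))\<^sup>2)" by (rule sums_summable)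
  show "(\<Sum>k. (cmod (a k + c * b k))\<^sup>2) = (\<Sum>k. (cmod (a k))\<^sup>2) + (cmod c)\<^sup>2 * (\<Sum>k. (cmod (b k))\<^sup>2)
          + 2 * Re (cnj c * (\<Sum>k. a k * cnj (b k)))"
    using s4 by (rule sums_unique[symmetric])
qed

lemma borel_measurable_cnj_fun[measurable]:
  assumes "f \<in> borel_measurable M"
  shows "(\<lambda>x. cnj (f x :: complex)) \<in> borel_measurable M"
proof -
  have "continuous_on UNIV (\<lambda>z::complex. cnj z)" by (intro continuous_intros)
  then have "(\<lambda>z::complex. cnj z) \<in> borel_measurable borel" by (rule borel_measurable_continuous_onI)
  from measurable_compose[OF assms this] show ?thesis by simp
qed

lemma L2_meas: "g \<in> L2 \<Longrightarrow> (\<lambda>x. indicator {0..1} x *\<^sub>R g x) \<in> borel_measurable lborel"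
  unfolding L2_def set_borel_measurable_def by auto

lemma L2_sq: "g \<in> L2 \<Longrightarrow> integrable lborel (\<lambda>x. indicator {0..1} x *\<^sub>R (cmod (g x))\<^sup>2)"
  unfolding L2_def set_integrable_def by auto

lemma ind_sq: "indicator A x *\<^sub>R (f x :: 'b::real_normed_vector) = indicator A x *\<^sub>R (indicator A x *\<^sub>R f x)"
  by (simp add: indicator_def)

lemma L2_prod_int:
  assumes g: "g \<in> L2" and h: "h \<in> L2"
  shows "integrable lborel (\<lambda>x. indicator {0..1} x *\<^sub>R (g x * cnj (h x)))"
proof (rule Bochner_Integration.integrable_bound)
  show "integrable lborel (\<lambda>x. indicator {0..1} x *\<^sub>R (cmod (g x))\<^sup>2 + indicator {0..1} x *\<^sub>R (cmod (h x))\<^sup>2)"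
    using L2_sq[OF g] L2_sq[OF h] by (rule Bochner_Integration.integrable_add)
  define G where "G = (\<lambda>x. indicator {0..1} x *\<^sub>R g x)"
  define H where "H = (\<lambda>x. indicator {0..1} x *\<^sub>R h x)"
  have [measurable]: "G \<in> borel_measurable lborel" "H \<in> borel_measurable lborel"
    using L2_meas[OF g] L2_meas[OF h] unfolding G_def H_def .
  have "(\<lambda>x. indicator {0..1} x *\<^sub>R (g x * cnj (h x))) = (\<lambda>x. G x * cnj (H x))"
    by (auto simp: fun_eq_iff indicator_def G_def H_def)
  also have "\<dots> \<in> borel_measurable lborel" by measurable
  finally show "(\<lambda>x. indicator {0..1} x *\<^sub>R (g x * cnj (h x))) \<in> borel_measurable lborel" .
  show "AE x in lborel. norm (indicator {0..1} x *\<^sub>R (g x * cnj (h x))) \<le>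
      norm (indicator {0..1} x *\<^sub>R (cmod (g x))\<^sup>2 + indicator {0..1} x *\<^sub>R (cmod (h x))\<^sup>2)"
    by (rule AE_I2) (auto simp: indicator_def norm_mult_cnj_le)
qed

lemma L2_expand:
  assumes g: "g \<in> L2" and h: "h \<in> L2"
  shows "(\<lambda>x. g x + c * h x) \<in> L2"
    and "(LINT x:{0..1}|lborel. (cmod (g x + c * h x))\<^sup>2) = (LINT x:{0..1}|lborel. (cmod (g x))\<^sup>2)
          + (cmod c)\<^sup>2 * (LINT x:{0..1}|lborel. (cmod (h x))\<^sup>2)
          + 2 * Re (cnj c * (LINT x:{0..1}|lborel. g x * cnj (h x)))"
proof -
  have i1: "integrable lborel (\<lambda>x. indicator {0..1} x *\<^sub>R (cmod (g x))\<^sup>2)" using L2_sq[OF g] .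
  have i2: "integrable lborel (\<lambda>x. (cmod c)\<^sup>2 * (indicator {0..1} x *\<^sub>R (cmod (h x))\<^sup>2))" using L2_sq[OF h] by simp
  have i3c: "integrable lborel (\<lambda>x. cnj c * (indicator {0..1} x *\<^sub>R (g x * cnj (h x))))"
    by (rule Bochner_Integration.integrable_mult_right[OF L2_prod_int[OF g h]])
  have i3: "integrable lborel (\<lambda>x. 2 * Re (cnj c * (indicator {0..1} x *\<^sub>R (g x * cnj (h x)))))"
    using Bochner_Integration.integrable_mult_right[OF integrable_Re[OF i3c], of 2] .
  have eq: "indicator {0..1} x *\<^sub>R (cmod (g x + c * h x))\<^sup>2 =
      indicator {0..1} x *\<^sub>R (cmod (g x))\<^sup>2 + (cmod c)\<^sup>2 * (indicator {0..1} x *\<^sub>R (cmod (h x))\<^sup>2)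
      + 2 * Re (cnj c * (indicator {0..1} x *\<^sub>R (g x * cnj (h x))))" for x
    by (simp add: cmod_add_sq indicator_def)
  have int: "integrable lborel (\<lambda>x. indicator {0..1} x *\<^sub>R (cmod (g x + c * h x))\<^sup>2)"
    unfolding eq using i1 i2 i3 by (intro Bochner_Integration.integrable_add)
  define G where "G = (\<lambda>x. indicator {0..1} x *\<^sub>R g x)"
  define H where "H = (\<lambda>x. indicator {0..1} x *\<^sub>R h x)"
  have [measurable]: "G \<in> borel_measurable lborel" "H \<in> borel_measurable lborel"
    using L2_meas[OF g] L2_meas[OF h] unfolding G_def H_def .
  have "(\<lambda>x. indicator {0..1} x *\<^sub>R (g x + c * h x)) = (\<lambda>x. G x + c * H x)"
    by (auto simp: fun_eq_iff indicator_def G_def H_def)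
  also have "\<dots> \<in> borel_measurable lborel" by measurable
  finally have meas: "(\<lambda>x. indicator {0..1} x *\<^sub>R (g x + c * h x)) \<in> borel_measurable lborel" .
  show "(\<lambda>x. g x + c * h x) \<in> L2"
    unfolding L2_def set_borel_measurable_def set_integrable_def using meas int by simp
  have "(LINT x:{0..1}|lborel. (cmod (g x + c * h x))\<^sup>2) = (\<integral>x. indicator {0..1} x *\<^sub>R (cmod (g x + c * h x))\<^sup>2 \<partial>lborel)"
    unfolding set_lebesgue_integral_def ..
  also have "\<dots> = (\<integral>x. indicator {0..1} x *\<^sub>R (cmod (g x))\<^sup>2 \<partial>lborel) + (\<integral>x. (cmod c)\<^sup>2 * (indicator {0..1} x *\<^sub>R (cmod (h x))\<^sup>2) \<partial>lborel)
      + (\<integral>x. 2 * Re (cnj c * (indicator {0..1} x *\<^sub>R (g x * cnj (h x)))) \<partial>lborel)"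
    unfolding eq using i1 i2 i3 by (simp add: Bochner_Integration.integral_add)
  also have "(\<integral>x. (cmod c)\<^sup>2 * (indicator {0..1} x *\<^sub>R (cmod (h x))\<^sup>2) \<partial>lborel) = (cmod c)\<^sup>2 * (LINT x:{0..1}|lborel. (cmod (h x))\<^sup>2)"
    unfolding set_lebesgue_integral_def by simp
  also have "(\<integral>x. 2 * Re (cnj c * (indicator {0..1} x *\<^sub>R (g x * cnj (h x)))) \<partial>lborel) = 2 * Re (\<integral>x. cnj c * (indicator {0..1} x *\<^sub>R (g x * cnj (h x))) \<partial>lborel)"
    using integral_Re[OF i3c] by simp
  also have "(\<integral>x. cnj c * (indicator {0..1} x *\<^sub>R (g x * cnj (h x))) \<partial>lborel) = cnj c * (LINT x:{0..1}|lborel. g x * cnj (h x))"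
    unfolding set_lebesgue_integral_def by (rule integral_mult_right_zero)
  finally show "(LINT x:{0..1}|lborel. (cmod (g x + c * h x))\<^sup>2) = (LINT x:{0..1}|lborel. (cmod (g x))\<^sup>2)
          + (cmod c)\<^sup>2 * (LINT x:{0..1}|lborel. (cmod (h x))\<^sup>2)
          + 2 * Re (cnj c * (LINT x:{0..1}|lborel. g x * cnj (h x)))"
    unfolding set_lebesgue_integral_def by simp
qed


lemma L2_scale: assumes h: "h \<in> L2" shows "(\<lambda>x. c * h x) \<in> L2"
proof -
  have "(\<lambda>x. h x + (c - 1) * h x) \<in> L2" by (rule L2_expand(1)[OF h h])
  moreover have "(\<lambda>x. h x + (c - 1) * h x) = (\<lambda>x. c * h x)" by (auto simp: fun_eq_iff algebra_simps)
  ultimately show ?thesis by simp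
qed

lemma H2_norm_sq: "f \<in> H2 \<Longrightarrow> (H2_norm f)\<^sup>2 = (\<Sum>k. (cmod (taylor_coeff f k))\<^sup>2)"
  unfolding H2_def H2_norm_def by (auto intro!: suminf_nonneg)

lemma L2_norm_sq: "(L2_norm g)\<^sup>2 = (LINT x:{0..1}|lborel. (cmod (g x))\<^sup>2)"
proof -
  have "(LINT x:{0..1}|lborel. (cmod (g x))\<^sup>2) \<ge> 0"
    unfolding set_lebesgue_integral_def by (intro integral_nonneg_AE) (auto simp: indicator_def)
  then show ?thesis unfolding L2_norm_def by simp
qed

lemma sar:
  assumes "is_sarason U"
  shows sar_H2: "\<And>g. g \<in> L2 \<Longrightarrow> U g \<in> H2"
    and sar_add: "\<And>g h z. g \<in> L2 \<Longrightarrow> h \<in> L2 \<Longrightarrow> z \<in> ball 0 1 \<Longrightarrow> U (\<lambda>x. g x + h x) z = U g z + U h z"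
    and sar_mult: "\<And>g c z. g \<in> L2 \<Longrightarrow> z \<in> ball 0 1 \<Longrightarrow> U (\<lambda>x. c * g x) z = c * U g z"
    and sar_iso: "\<And>g. g \<in> L2 \<Longrightarrow> H2_norm (U g) = L2_norm g"
    and sar_pow: "\<And>n z. z \<in> ball 0 1 \<Longrightarrow> U (\<lambda>x. complex_of_real x ^ n) z
          = (1 / of_nat (n + 1)) * kernel (of_nat n / of_nat (n + 1)) z"
proof -
  note A = assms[unfolded is_sarason_def]
  show "\<And>g. g \<in> L2 \<Longrightarrow> U g \<in> H2" using conjunct1[OF A] by blast
  show "\<And>g h z. g \<in> L2 \<Longrightarrow> h \<in> L2 \<Longrightarrow> z \<in> ball 0 1 \<Longrightarrow> U (\<lambda>x. g x + h x) z = U g z + U h z"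
    using conjunct1[OF conjunct2[OF A]] by blast
  show "\<And>g c z. g \<in> L2 \<Longrightarrow> z \<in> ball 0 1 \<Longrightarrow> U (\<lambda>x. c * g x) z = c * U g z"
    using conjunct1[OF conjunct2[OF conjunct2[OF A]]] by blast
  show "\<And>g. g \<in> L2 \<Longrightarrow> H2_norm (U g) = L2_norm g"
    using conjunct1[OF conjunct2[OF conjunct2[OF conjunct2[OF conjunct2[OF A]]]]] by blast
  show "\<And>n z. z \<in> ball 0 1 \<Longrightarrow> U (\<lambda>x. complex_of_real x ^ n) z
          = (1 / of_nat (n + 1)) * kernel (of_nat n / of_nat (n + 1)) z"
    using conjunct2[OF conjunct2[OF conjunct2[OF conjunct2[OF conjunct2[OF conjunct2[OF A]]]]]] by blast
qed

lemma ip_eq: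
  assumes U: "is_sarason U" and g: "g \<in> L2" and h: "h \<in> L2"
  shows "(LINT x:{0..1}|lborel. g x * cnj (h x)) = (\<Sum>k. taylor_coeff (U g) k * cnj (taylor_coeff (U h) k))"
proof -
  note UH = sar_H2[OF U] and Uadd = sar_add[OF U] and Umult = sar_mult[OF U] and Uiso = sar_iso[OF U]
  define a where "a k = taylor_coeff (U g) k" for k
  define b where "b k = taylor_coeff (U h) k" for k
  have sa: "summable (\<lambda>k. (cmod (a k))\<^sup>2)" using UH[OF g] unfolding H2_def a_def by auto
  have sb: "summable (\<lambda>k. (cmod (b k))\<^sup>2)" using UH[OF h] unfolding H2_def b_def by auto
  have hg: "U g holomorphic_on ball 0 1" using UH[OF g] unfolding H2_def by auto
  have hh: "U h holomorphic_on ball 0 1" using UH[OF h] unfolding H2_def by auto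
  have key: "Re (cnj c * (LINT x:{0..1}|lborel. g x * cnj (h x))) = Re (cnj c * (\<Sum>k. a k * cnj (b k)))" for c
  proof -
    have ch: "(\<lambda>x. c * h x) \<in> L2" by (rule L2_scale[OF h])
    have gch: "(\<lambda>x. g x + c * h x) \<in> L2" by (rule L2_expand(1)[OF g h])
    have Ueq: "\<forall>z\<in>ball 0 1. U (\<lambda>x. g x + c * h x) z = U g z + c * U h z"
      using Uadd[OF g ch] Umult[OF h] by simp
    have tceq: "taylor_coeff (U (\<lambda>x. g x + c * h x)) k = a k + c * b k" for k
      unfolding a_def b_def using tc_cong[OF Ueq] tc_lin[OF hg hh] by simp
    have "(L2_norm (\<lambda>x. g x + c * h x))\<^sup>2 = (H2_norm (U (\<lambda>x. g x + c * h x)))\<^sup>2"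
      using Uiso[OF gch] by simp
    also have "\<dots> = (\<Sum>k. (cmod (a k + c * b k))\<^sup>2)"
      using H2_norm_sq[OF UH[OF gch]] tceq by simp
    also have "\<dots> = (\<Sum>k. (cmod (a k))\<^sup>2) + (cmod c)\<^sup>2 * (\<Sum>k. (cmod (b k))\<^sup>2) + 2 * Re (cnj c * (\<Sum>k. a k * cnj (b k)))"
      by (rule sum_expand(3)[OF sa sb])
    also have "(\<Sum>k. (cmod (a k))\<^sup>2) = (LINT x:{0..1}|lborel. (cmod (g x))\<^sup>2)"
      using H2_norm_sq[OF UH[OF g]] Uiso[OF g] L2_norm_sq[of g] unfolding a_def by simp
    also have "(\<Sum>k. (cmod (b k))\<^sup>2) = (LINT x:{0..1}|lborel. (cmod (h x))\<^sup>2)"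
      using H2_norm_sq[OF UH[OF h]] Uiso[OF h] L2_norm_sq[of h] unfolding b_def by simp
    finally have e1: "(L2_norm (\<lambda>x. g x + c * h x))\<^sup>2 = (LINT x:{0..1}|lborel. (cmod (g x))\<^sup>2) + (cmod c)\<^sup>2 * (LINT x:{0..1}|lborel. (cmod (h x))\<^sup>2) + 2 * Re (cnj c * (\<Sum>k. a k * cnj (b k)))" .
    have e2: "(L2_norm (\<lambda>x. g x + c * h x))\<^sup>2 = (LINT x:{0..1}|lborel. (cmod (g x))\<^sup>2) + (cmod c)\<^sup>2 * (LINT x:{0..1}|lborel. (cmod (h x))\<^sup>2) + 2 * Re (cnj c * (LINT x:{0..1}|lborel. g x * cnj (h x)))"
      using L2_norm_sq[of "\<lambda>x. g x + c * h x"] L2_expand(2)[OF g h, of c] by simp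
    from e1 e2 show ?thesis by simp
  qed
  have r: "Re (LINT x:{0..1}|lborel. g x * cnj (h x)) = Re (\<Sum>k. a k * cnj (b k))" using key[of 1] by simp
  have i: "Im (LINT x:{0..1}|lborel. g x * cnj (h x)) = Im (\<Sum>k. a k * cnj (b k))" using key[of "\<i>"] by simp
  show ?thesis using r i unfolding a_def b_def by (simp add: complex_eq_iff)
qed

lemma tc_Upow:
  assumes U: "is_sarason U"
  shows "taylor_coeff (U (\<lambda>x. complex_of_real x ^ n)) k = of_real ((real n / real (Suc n)) ^ k / real (Suc n))"
proof -
  define a where "a = real n / real (Suc n)"
  have a01: "0 \<le> a" "a < 1" unfolding a_def by (auto simp: field_simps)
  have Ueq: "\<forall>z\<in>ball 0 1. U (\<lambda>x. complex_of_real x ^ n) z = (\<lambda>z. (1 / of_nat (Suc n)) * (1 / (1 - of_real a * z))) z"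
  proof
    fix z :: complex assume z: "z \<in> ball 0 1"
    have c: "cnj (of_nat n / of_nat (n + 1) :: complex) = of_real a" unfolding a_def by simp
    show "U (\<lambda>x. complex_of_real x ^ n) z = (\<lambda>z. (1 / of_nat (Suc n)) * (1 / (1 - of_real a * z))) z"
      using sar_pow[OF U z, of n] unfolding kernel_def c by simp
  qed
  define F where "F = Abs_fps (\<lambda>k. complex_of_real (a ^ k / real (Suc n)))"
  have exp: "(\<lambda>z. (1 / of_nat (Suc n)) * (1 / (1 - of_real a * z))) has_fps_expansion F"
  proof (rule has_fps_expansionI)
    have "eventually (\<lambda>u. u \<in> ball (0::complex) 1) (nhds 0)"
      by (intro eventually_nhds_in_open) auto
    then show "eventually (\<lambda>u. (\<lambda>k. fps_nth F k * u ^ k) sums ((1 / of_nat (Suc n)) * (1 / (1 - of_real a * u)))) (nhds 0)"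
    proof eventually_elim
      case (elim u)
      have "norm (of_real a * u) < 1"
      proof -
        have "norm (of_real a * u) = a * norm u" using a01 by (simp add: norm_mult)
        also have "\<dots> \<le> 1 * norm u" using a01 by (intro mult_right_mono) auto
        also have "\<dots> < 1" using elim by simp
        finally show ?thesis .
      qed
      then have "(\<lambda>k. (of_real a * u) ^ k) sums (1 / (1 - of_real a * u))" by (rule geometric_sums)
      then have "(\<lambda>k. (1 / of_nat (Suc n)) * (of_real a * u) ^ k) sums ((1 / of_nat (Suc n)) * (1 / (1 - of_real a * u)))"
        by (rule sums_mult)
      then show ?case unfolding F_def by (simp add: power_mult_distrib field_simps)
    qed
  qed
  have "taylor_coeff (U (\<lambda>x. complex_of_real x ^ n)) k = taylor_coeff (\<lambda>z. (1 / of_nat (Suc n)) * (1 / (1 - of_real a * z))) k"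
    by (rule tc_cong[OF Ueq])
  also have "\<dots> = fps_nth F k" unfolding taylor_coeff_def using fps_nth_fps_expansion[OF exp, of k] by simp
  finally show ?thesis unfolding F_def a_def by simp
qed

lemma H2_series: "f \<in> H2 \<Longrightarrow> w \<in> ball 0 1 \<Longrightarrow> (\<lambda>k. taylor_coeff f k * w ^ k) sums f w"
  unfolding H2_def taylor_coeff_def using holomorphic_power_series[of f 0 1 w] by simp

lemma pow_L2: "(\<lambda>x. complex_of_real x ^ n) \<in> L2"
  unfolding L2_def set_borel_measurable_def set_integrable_def
proof (intro CollectI conjI)
  show "(\<lambda>x. indicat_real {0..1} x *\<^sub>R complex_of_real x ^ n) \<in> borel_measurable lborel"
    by measurable
  show "integrable lborel (\<lambda>x. indicat_real {0..1} x *\<^sub>R (cmod (complex_of_real x ^ n))\<^sup>2)"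
    by (rule borel_integrable_compact) (auto intro!: continuous_intros)
qed

lemma g_moment:
  assumes U: "is_sarason U" and f: "f \<in> H2" and g: "g \<in> L2" and Ug: "\<forall>z\<in>ball 0 1. U g z = f z"
  shows "(LINT x:{0..1}|lborel. g x * complex_of_real x ^ n) = f (of_real (real n / real (Suc n))) / of_nat (Suc n)"
proof -
  define a where "a = real n / real (Suc n)"
  have a01: "0 \<le> a" "a < 1" unfolding a_def by (auto simp: field_simps)
  have "(LINT x:{0..1}|lborel. g x * complex_of_real x ^ n) = (LINT x:{0..1}|lborel. g x * cnj (complex_of_real x ^ n))"
    by simp
  also have "\<dots> = (\<Sum>k. taylor_coeff (U g) k * cnj (taylor_coeff (U (\<lambda>x. complex_of_real x ^ n)) k))"
    by (rule ip_eq[OF U g pow_L2])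
  also have "\<dots> = (\<Sum>k. taylor_coeff f k * of_real a ^ k / of_nat (Suc n))"
    unfolding tc_Upow[OF U] tc_cong[OF Ug] a_def by (simp add: field_simps)
  also have "\<dots> = f (of_real a) / of_nat (Suc n)"
  proof -
    have "(\<lambda>k. taylor_coeff f k * of_real a ^ k) sums f (of_real a)"
      by (rule H2_series[OF f]) (use a01 in simp)
    then have "(\<lambda>k. taylor_coeff f k * of_real a ^ k / of_nat (Suc n)) sums (f (of_real a) / of_nat (Suc n))"
      by (rule sums_divide)
    then show ?thesis by (rule sums_unique[symmetric])
  qed
  finally show ?thesis unfolding a_def .
qed

lemma lnpow: "(l::real)^j = (-1)^j * (- l)^j"
proof -
  have "(-1)^j * (- l)^j = ((-1) * (- l))^j" by (rule power_mult_distrib[symmetric])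
  then show ?thesis by simp
qed

lemma aux1: "(f::real) > 0 \<Longrightarrow> s > 0 \<Longrightarrow> c / f\<^sup>2 * (f / s) = c * (1 / (f * s))"
  by (simp add: power2_eq_square field_simps)

lemma aux2: "(f::real) > 0 \<Longrightarrow> m > 0 \<Longrightarrow> r > 0 \<Longrightarrow>
    (f * B / r ^ j) * (1 / (f * m ^ Suc j)) = B / m * (1 / (r * m)) ^ j"
  by (simp add: power_divide power_mult_distrib field_simps)

theorem lemma3p4:
  fixes U :: "(real \<Rightarrow> complex) \<Rightarrow> complex \<Rightarrow> complex"
    and f F :: "complex \<Rightarrow> complex" and S :: "complex set" and g :: "real \<Rightarrow> complex"
  assumes "is_sarason U"
    and "f \<in> H2"
    and "open S" and "1 \<in> S" and "F holomorphic_on (ball 0 1 \<union> S)"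
    and "\<forall>z\<in>ball 0 1. F z = f z"
    and "g \<in> L2" and "\<forall>z\<in>ball 0 1. U g z = f z"
  shows "AE x in lborel. x \<in> {0..1} \<longrightarrow>
           (\<lambda>j. (deriv ^^ j) F 1 * complex_of_real ((ln x) ^ j / (fact j)\<^sup>2)) sums g x"
proof -
  obtain e where e: "e > 0" "cball 1 e \<subseteq> S" using open_contains_cball assms(3,4) by blast
  define \<rho> where "\<rho> = e / 2"
  have \<rho>: "\<rho> > 0" using e by (simp add: \<rho>_def)
  have holF: "F holomorphic_on ball 1 e"
    by (rule holomorphic_on_subset[OF assms(5)]) (use e(2) ball_subset_cball[of 1 e] in blast)
  have sub: "cball 1 \<rho> \<subseteq> ball 1 e" using e by (auto simp: \<rho>_def)
  have contF: "continuous_on (cball 1 \<rho>) F"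
    using holomorphic_on_imp_continuous_on[OF holF] sub by (rule continuous_on_subset)
  have "compact (F ` cball 1 \<rho>)" by (rule compact_continuous_image[OF contF compact_cball])
  then obtain B where B: "B > 0" "\<And>y. y \<in> F ` cball 1 \<rho> \<Longrightarrow> norm y \<le> B"
    using compact_imp_bounded bounded_pos by metis
  define B0 where "B0 = B + 1"
  have B0: "B0 > 0" using B by (simp add: B0_def)
  have FB: "norm (F w) < B0" if "w \<in> cball 1 \<rho>" for w
    using B(2)[of "F w"] that by (auto simp: B0_def)
  have cb: "cmod ((deriv ^^ j) F 1) \<le> fact j * B0 / \<rho> ^ j" for j
  proof (cases "j = 0")
    case True then show ?thesis using FB[of 1] \<rho> by simp
  next
    case False
    show ?thesis
    proof (rule Cauchy_higher_deriv_bound[of F 1 \<rho> 0 B0 j])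
      show "F holomorphic_on ball 1 \<rho>" by (rule holomorphic_on_subset[OF holF]) (use sub in auto)
      show "continuous_on (cball 1 \<rho>) F" by (rule contF)
      show "\<And>w. w \<in> ball 1 \<rho> \<Longrightarrow> F w \<in> ball 0 B0" using FB by auto
    qed (use \<rho> False in auto)
  qed
  define T where "T j x = (deriv ^^ j) F 1 * complex_of_real ((ln x) ^ j / (fact j)\<^sup>2)" for j x
  have Tb: "norm (T j x) \<le> B0 * (inverse (fact j) * (\<bar>ln x\<bar> / \<rho>) ^ j)" for j x
  proof -
    have "norm (T j x) = cmod ((deriv ^^ j) F 1) * (\<bar>ln x\<bar> ^ j / (fact j)\<^sup>2)"
      by (simp add: T_def norm_mult norm_divide norm_power power_abs)
    also have "\<dots> \<le> (fact j * B0 / \<rho> ^ j) * (\<bar>ln x\<bar> ^ j / (fact j)\<^sup>2)"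
      by (rule mult_right_mono[OF cb]) simp
    also have "\<dots> = B0 * (inverse (fact j) * (\<bar>ln x\<bar> / \<rho>) ^ j)"
      by (simp add: power2_eq_square power_divide field_simps)
    finally show ?thesis .
  qed
  have Tsum: "summable (\<lambda>j. norm (T j x))" for x
    by (rule summable_comparison_test'[OF summable_mult[OF summable_exp[of "\<bar>ln x\<bar> / \<rho>"]], of 0 _ B0])
       (use Tb in simp)
  define hf where "hf x = (\<Sum>j. T j x)" for x
  have hfs: "(\<lambda>j. T j x) sums hf x" for x
    unfolding hf_def by (rule summable_sums[OF summable_norm_cancel[OF Tsum]])
  obtain N :: nat where N: "1 / \<rho> < real N" using reals_Archimedean2 by blast
  have hmom: "set_integrable lborel {0..1} (\<lambda>x. hf x * complex_of_real x ^ n) \<and>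
      (LINT x:{0..1}|lborel. hf x * complex_of_real x ^ n) = f (of_real (real n / real (Suc n))) / of_nat (Suc n)"
    if n: "n \<ge> N" for n
  proof -
    have n\<rho>: "1 / real (Suc n) < \<rho>"
    proof -
      have "1 / \<rho> < real (Suc n)" using N n by linarith
      then show ?thesis using \<rho> by (simp add: field_simps)
    qed
    define q where "q = 1 / (\<rho> * real (Suc n))"
    have q: "0 \<le> q" "q < 1" unfolding q_def using \<rho> n\<rho> by (auto simp: field_simps)
    define K where "K j = (deriv ^^ j) F 1 * of_real ((-1)^j / (fact j)\<^sup>2)" for j
    define fj where "fj j x = indicator {0..1} x *\<^sub>R (T j x * complex_of_real x ^ n)" for j x
    have fj_eq: "fj j = (\<lambda>x. K j * of_real (indicator {0..1} x *\<^sub>R (x^n * (- ln x)^j)))" for j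
      by (auto simp: fun_eq_iff fj_def T_def K_def indicator_def lnpow[of "ln _" j] mult_ac)
    have im: "integrable lborel (\<lambda>x::real. indicator {0..1} x *\<^sub>R (x^n * (- ln x)^j))" for j
      using mom(1)[of n j] unfolding set_integrable_def by simp
    have vm: "(\<integral>x. indicator {0..1} x *\<^sub>R ((x::real)^n * (- ln x)^j) \<partial>lborel) = fact j / real (Suc n) ^ Suc j" for j
      using mom(2)[of n j] unfolding set_lebesgue_integral_def by (simp add: algebra_simps)
    have ifj: "integrable lborel (fj j)" for j
      unfolding fj_eq by (rule Bochner_Integration.integrable_mult_right[OF integrable_of_real[OF im[of j]]])
    have vfj: "integral\<^sup>L lborel (fj j) = K j * of_real (fact j / real (Suc n) ^ Suc j)" for j
      unfolding fj_eq integral_mult_right_zero integral_complex_of_real vm ..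
    have nn: "0 \<le> indicator {0..1} x *\<^sub>R (x^n * (- ln x)^j)" for x :: real and j :: nat
    proof (cases "x \<in> {0..1}")
      case True
      then have "ln x \<le> 0" by (cases "x = 0") (auto simp: ln_le_zero_iff)
      then show ?thesis using True by simp
    qed simp
    have nfj: "(\<integral>x. norm (fj j x) \<partial>lborel) = norm (K j) * (fact j / real (Suc n) ^ Suc j)" for j
    proof -
      have "(\<lambda>x. norm (fj j x)) = (\<lambda>x. norm (K j) * (indicator {0..1} x *\<^sub>R (x^n * (- ln x)^j)))"
      proof (rule ext)
        fix x :: real
        have "norm (fj j x) = norm (K j) * \<bar>indicator {0..1} x *\<^sub>R (x^n * (- ln x)^j)\<bar>"
          unfolding fj_eq by (simp only: norm_mult norm_of_real)
        also have "\<bar>indicator {0..1} x *\<^sub>R (x^n * (- ln x)^j)\<bar> = indicator {0..1} x *\<^sub>R (x^n * (- ln x)^j)"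
          by (rule abs_of_nonneg[OF nn])
        finally show "norm (fj j x) = norm (K j) * (indicator {0..1} x *\<^sub>R (x^n * (- ln x)^j))" .
      qed
      then show ?thesis using vm by simp
    qed
    have nKb: "norm (K j) * (fact j / real (Suc n) ^ Suc j) \<le> B0 / real (Suc n) * q ^ j" for j
    proof -
      have "norm (K j) = cmod ((deriv ^^ j) F 1) / (fact j)\<^sup>2"
        by (simp add: K_def norm_mult norm_divide norm_power)
      then have "norm (K j) * (fact j / real (Suc n) ^ Suc j) = cmod ((deriv ^^ j) F 1) * (1 / (fact j * real (Suc n) ^ Suc j))"
        using aux1[of "fact j" "real (Suc n) ^ Suc j" "cmod ((deriv ^^ j) F 1)"] by simp
      also have "\<dots> \<le> (fact j * B0 / \<rho> ^ j) * (1 / (fact j * real (Suc n) ^ Suc j))"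
        by (rule mult_right_mono[OF cb]) simp
      also have "\<dots> = B0 / real (Suc n) * q ^ j"
        unfolding q_def using aux2[of "fact j" "real (Suc n)" \<rho> B0 j] \<rho> by simp
      finally show ?thesis .
    qed
    have sum_int: "summable (\<lambda>j. \<integral>x. norm (fj j x) \<partial>lborel)"
      unfolding nfj
      by (rule summable_comparison_test'[OF summable_mult[OF summable_geometric[of q]], of 0 _ "B0 / real (Suc n)"])
         (use q nKb in auto)
    have fjb: "norm (fj j x) \<le> norm (T j x)" for j x
    proof (cases "x \<in> {0..1}")
      case True
      then have "norm (complex_of_real x ^ n) \<le> 1" by (simp add: norm_power power_le_one)
      then show ?thesis using True by (simp add: fj_def norm_mult mult_left_le)
    qed (simp add: fj_def)
    have sum_pt: "AE x in lborel. summable (\<lambda>j. norm (fj j x))"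
      by (rule AE_I2, rule summable_comparison_test'[OF Tsum, of 0]) (use fjb in simp)
    note suminf_facts = integrable_suminf[OF ifj sum_pt sum_int] sums_integral[OF ifj sum_pt sum_int]
    have fj_sum: "(\<Sum>j. fj j x) = indicator {0..1} x *\<^sub>R (hf x * complex_of_real x ^ n)" for x
    proof -
      have "fj j x = T j x * (indicator {0..1} x *\<^sub>R complex_of_real x ^ n)" for j
        by (simp add: fj_def)
      then have "(\<Sum>j. fj j x) = (\<Sum>j. T j x * (indicator {0..1} x *\<^sub>R complex_of_real x ^ n))" by simp
      also have "\<dots> = hf x * (indicator {0..1} x *\<^sub>R complex_of_real x ^ n)"
        unfolding hf_def by (rule suminf_mult2[symmetric]) (rule summable_norm_cancel[OF Tsum])
      finally show ?thesis by simp
    qed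
    define w where "w = complex_of_real (real n / real (Suc n))"
    have w1: "w - 1 = - (1 / of_nat (Suc n))"
    proof -
      have s: "real (Suc n) > 0" by simp
      have r: "real n / real (Suc n) - 1 = - (1 / real (Suc n))" using s by (simp add: field_simps)
      have "w - 1 = complex_of_real (real n / real (Suc n) - 1)" unfolding w_def by simp
      also have "\<dots> = complex_of_real (- (1 / real (Suc n)))" unfolding r ..
      also have "\<dots> = - (1 / of_nat (Suc n))" by simp
      finally show ?thesis .
    qed
    have wball: "w \<in> ball 1 e"
    proof -
      have "dist 1 w = norm (w - 1)" by (simp add: dist_norm norm_minus_commute)
      also have "\<dots> = 1 / real (Suc n)" unfolding w1 norm_minus_cancel norm_divide norm_one norm_of_nat by simp
      finally have "dist 1 w = 1 / real (Suc n)" .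
      then show ?thesis using n\<rho> \<rho>_def e by simp
    qed
    have w0: "w \<in> ball 0 1"
    proof -
      have lt: "real n / real (Suc n) < 1" by (simp add: divide_less_eq)
      have "norm w = \<bar>real n / real (Suc n)\<bar>" unfolding w_def by (rule norm_of_real)
      also have "\<dots> < 1" using lt by simp
      finally show ?thesis by simp
    qed
    have ps: "(\<lambda>j. (deriv ^^ j) F 1 / fact j * (w - 1) ^ j) sums F w"
      by (rule holomorphic_power_series[OF holF wball])
    have eqj: "integral\<^sup>L lborel (fj j) = (deriv ^^ j) F 1 / fact j * (w - 1) ^ j / of_nat (Suc n)" for j
    proof -
      have "(w - 1) ^ j = (-1) ^ j / of_nat (Suc n) ^ j" unfolding w1 by (simp add: power_divide power_minus')
      then show ?thesis unfolding vfj K_def by (simp add: power2_eq_square field_simps)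
    qed
    have "(\<lambda>j. integral\<^sup>L lborel (fj j)) sums (F w / of_nat (Suc n))"
      unfolding eqj by (rule sums_divide[OF ps])
    then have val: "(\<integral>x. (\<Sum>j. fj j x) \<partial>lborel) = f w / of_nat (Suc n)"
      using suminf_facts(2) sums_unique2 assms(6) w0 by metis
    show ?thesis
      using suminf_facts(1) val unfolding set_integrable_def set_lebesgue_integral_def fj_sum w_def
      by simp
  qed
  have gmom: "set_integrable lborel {0..1} (\<lambda>x. g x * complex_of_real x ^ n) \<and>
      (LINT x:{0..1}|lborel. g x * complex_of_real x ^ n) = f (of_real (real n / real (Suc n))) / of_nat (Suc n)" for n
  proof
    show "set_integrable lborel {0..1} (\<lambda>x. g x * complex_of_real x ^ n)"
      using L2_prod_int[OF assms(7) pow_L2[of n]] unfolding set_integrable_def by simp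
    show "(LINT x:{0..1}|lborel. g x * complex_of_real x ^ n) = f (of_real (real n / real (Suc n))) / of_nat (Suc n)"
      by (rule g_moment[OF assms(1,2,7,8)])
  qed
  define \<phi> where "\<phi> x = g x * complex_of_real x ^ N - hf x * complex_of_real x ^ N" for x
  have i\<phi>: "set_integrable lborel {0..1} \<phi>"
    unfolding \<phi>_def using gmom[of N] hmom[of N] by (intro set_integral_diff(1)) auto
  have z\<phi>: "(LINT x:{0..1}|lborel. \<phi> x * complex_of_real x ^ m) = 0" if "m \<ge> 0" for m
  proof -
    have "(LINT x:{0..1}|lborel. \<phi> x * complex_of_real x ^ m) =
        (LINT x:{0..1}|lborel. g x * complex_of_real x ^ (N + m) - hf x * complex_of_real x ^ (N + m))"
      unfolding \<phi>_def by (simp add: power_add algebra_simps)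
    also have "\<dots> = (LINT x:{0..1}|lborel. g x * complex_of_real x ^ (N + m)) - (LINT x:{0..1}|lborel. hf x * complex_of_real x ^ (N + m))"
      using gmom[of "N + m"] hmom[of "N + m"] by (intro set_integral_diff(2)) auto
    also have "\<dots> = 0" using gmom[of "N + m"] hmom[of "N + m"] by simp
    finally show ?thesis .
  qed
  have "AE x in lborel. x \<in> {0..1} \<longrightarrow> \<phi> x = 0"
    by (rule moment_unique[OF i\<phi> z\<phi>])
  then show ?thesis using AE_lborel_singleton[of 0]
  proof eventually_elim
    case (elim x)
    show ?case
    proof
      assume x: "x \<in> {0..1}"
      then have "(g x - hf x) * complex_of_real x ^ N = 0" using elim unfolding \<phi>_def by (simp add: algebra_simps)
      then have "g x = hf x" using elim by simp
      then show "(\<lambda>j. (deriv ^^ j) F 1 * complex_of_real ((ln x) ^ j / (fact j)\<^sup>2)) sums g x"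
        using hfs[of x] unfolding T_def by simp
    qed
  qed
qed

end
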